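(* There exists a cubic (3-regular) bipartite graph on 20 vertices that is not B-factorizable; in fact there is an additional generator $v\in\overline{\mathbf N}(PM(V))\cap\mathrm{problem}(V)$ with $2v\in\mathbf N(PM(V))$ such that $E(v)$ is such a cubic bipartite graph.
   Context: Let $V$ be a finite set with $|V|$ even. $K=\binom{V}{2}$ is the set of 2-element subsets of $V$. An equal partition of $V$ is an unordered pair $\{H,A\}$ of disjoint subsets with $H\cup A=V$ and $|H|=|A|=|V|/2$; $C=C(V)$ is the set of equal partitions. For $c=\{H,A\}\in C$, $B_c$ is the complete bipartite graph with parts $H$ and $A$. Vectors live in $\mathbb N^{K\cup C}$ with $\mathbb N=\{0,1,2,\dots\}$; $v|_K$ denotes the restriction to coordinates in $K$. For $E\subseteq K$, $\chi_E\in\{0,1\}^K$ is its indicator vector; $\chi_K$ is the all-ones vector on $K$. For $E\subseteq K$ and $c\in C$, $\chi_{E,c}\in\mathbb N^{K\cup C}$ has $K$-components $\chi_E$ and $C$-components equal to the indicator of $c$. $PM(V)=\{\chi_{q,c}: c\in C,\ q\text{ a perfect matching of }B_c\}$. For $\mathcal M\subseteq\mathbb N^{K\cup C}$, $\mathbf N(\mathcal M)$ is the set of finite nonnegative integer combinations of elements of $\mathcal M$, and $\overline{\mathbf N}(\mathcal M)=\{v\in\mathbb N^{K\cup C}: kv\in\mathbf N(\mathcal M)\text{ for some integer }k\ge1\}$. For $v\in\mathbb N^{K\cup C}$, $E(v)=\{e\in K: v(e)=1\}$. $\mathrm{problem}(V)$ is the set of $v\in\mathbb N^{K\cup C}$ such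 that $v|_K\le\chi_K$, the graph $(V,E(v))$ is regular, and $\frac{|V|}{2}\sum_{c\in C}v(c)=\sum_{e\in K}v(e)$. A regular graph $G=(V,E)$ is B-factorizable if every $v\in\overline{\mathbf N}(PM(V))$ with $v|_K=\chi_E$ belongs to $\mathbf N(PM(V))$. The monoid $\overline{\mathbf N}(PM(V))$ is pointed, hence has a unique inclusion-minimal generating set (as a monoid), its Hilbert basis. An additional generator is an element of the Hilbert basis of $\overline{\mathbf N}(PM(V))$ that does not belong to $PM(V)$. *)

theory Defs
  imports Main
begin

text \<open>Vectors in N^(K \<union> C) are represented as pairs (K-part, C-part) of
  nat-valued functions, supported on K and C respectively.\<close>

type_synonym 'a vec = "('a set \<Rightarrow> nat) \<times> ('a set set \<Rightarrow> nat)"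

definition Kset :: "'a set \<Rightarrow> 'a set set" where
  "Kset V = {e. e \<subseteq> V \<and> card e = 2}"

definition Cset :: "'a set \<Rightarrow> 'a set set set" where
  "Cset V = {{H, V - H} | H. H \<subseteq> V \<and> 2 * card H = card V}"

definition vecs :: "'a set \<Rightarrow> 'a vec set" where
  "vecs V = {v. (\<forall>e. e \<notin> Kset V \<longrightarrow> fst v e = 0) \<and> (\<forall>c. c \<notin> Cset V \<longrightarrow> snd v c = 0)}"

definition chiEc :: "'a set set \<Rightarrow> 'a set set \<Rightarrow> 'a vec" where
  "chiEc E c = ((\<lambda>e. if e \<in> E then 1 else 0), (\<lambda>c'. if c' = c then 1 else 0))"

definition bip_edges :: "'a set \<Rightarrow> 'a set set \<Rightarrow> 'a set set" where
  "bip_edges V c = {e \<in> Kset V. \<forall>X\<in>c. card (e \<inter> X) = 1}"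

definition perfect_matching_of :: "'a set \<Rightarrow> 'a set set \<Rightarrow> 'a set set \<Rightarrow> bool" where
  "perfect_matching_of V F q \<longleftrightarrow> q \<subseteq> F \<and> (\<forall>x\<in>V. \<exists>!e. e \<in> q \<and> x \<in> e)"

definition PM :: "'a set \<Rightarrow> 'a vec set" where
  "PM V = {chiEc q c | q c. c \<in> Cset V \<and> perfect_matching_of V (bip_edges V c) q}"

definition smul :: "nat \<Rightarrow> 'a vec \<Rightarrow> 'a vec" where
  "smul k v = ((\<lambda>e. k * fst v e), (\<lambda>c. k * snd v c))"

definition Ncone :: "'a vec set \<Rightarrow> 'a vec set" where
  "Ncone M = {v. \<exists>F lam. finite F \<and> F \<subseteq> M \<and>
      v = ((\<lambda>e. \<Sum>m\<in>F. lam m * fst m e), (\<lambda>c. \<Sum>m\<in>F. lam m * snd m c))}"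

definition Nbar :: "'a set \<Rightarrow> 'a vec set \<Rightarrow> 'a vec set" where
  "Nbar V M = {v \<in> vecs V. \<exists>k::nat. k \<ge> 1 \<and> smul k v \<in> Ncone M}"

definition Ev :: "'a set \<Rightarrow> 'a vec \<Rightarrow> 'a set set" where
  "Ev V v = {e \<in> Kset V. fst v e = 1}"

definition degree :: "'a set set \<Rightarrow> 'a \<Rightarrow> nat" where
  "degree E x = card {e \<in> E. x \<in> e}"

definition regular_graph :: "'a set \<Rightarrow> 'a set set \<Rightarrow> bool" where
  "regular_graph V E \<longleftrightarrow> E \<subseteq> Kset V \<and> (\<exists>d. \<forall>x\<in>V. degree E x = d)"

definition cubic_graph :: "'a set \<Rightarrow> 'a set set \<Rightarrow> bool" where
  "cubic_graph V E \<longleftrightarrow> E \<subseteq> Kset V \<and> (\<forall>x\<in>V. degree E x = 3)"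

definition bipartite_graph :: "'a set \<Rightarrow> 'a set set \<Rightarrow> bool" where
  "bipartite_graph V E \<longleftrightarrow> E \<subseteq> Kset V \<and> (\<exists>X. X \<subseteq> V \<and> (\<forall>e\<in>E. card (e \<inter> X) = 1))"

definition problem :: "'a set \<Rightarrow> 'a vec set" where
  "problem V = {v \<in> vecs V. (\<forall>e\<in>Kset V. fst v e \<le> 1) \<and> regular_graph V (Ev V v) \<and>
      (card V div 2) * (\<Sum>c\<in>Cset V. snd v c) = (\<Sum>e\<in>Kset V. fst v e)}"

definition B_factorizable :: "'a set \<Rightarrow> 'a set set \<Rightarrow> bool" where
  "B_factorizable V E \<longleftrightarrow> regular_graph V E \<and>
     (\<forall>v \<in> Nbar V (PM V). fst v = (\<lambda>e. if e \<in> E then 1 else 0) \<longrightarrow> v \<in> Ncone (PM V))"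

text \<open>Hilbert basis: an inclusion-minimal generating set of the monoid Nbar(PM(V)) (unique since the monoid is pointed).\<close>
definition min_generating :: "'a vec set \<Rightarrow> 'a vec set \<Rightarrow> bool" where
  "min_generating S H \<longleftrightarrow> H \<subseteq> S \<and> Ncone H = S \<and> (\<forall>H'. H' \<subset> H \<longrightarrow> Ncone H' \<noteq> S)"

definition hilbert_basis :: "'a vec set \<Rightarrow> 'a vec set" where
  "hilbert_basis S = {v. \<exists>H. min_generating S H \<and> v \<in> H}"

definition additional_generator :: "'a set \<Rightarrow> 'a vec \<Rightarrow> bool" where
  "additional_generator V v \<longleftrightarrow> v \<in> hilbert_basis (Nbar V (PM V)) \<and> v \<notin> PM V"

end

theory Submission
  imports Defs
begin


lemma finite_Kset: "finite V \<Longrightarrow> finite (Kset V)"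
  unfolding Kset_def by (rule finite_subset[of _ "Pow V"]) auto

lemma finite_Cset: "finite V \<Longrightarrow> finite (Cset V)"
  unfolding Cset_def by (rule finite_subset[of _ "Pow (Pow V)"]) auto

lemma pm_sum:
  fixes g :: "'a \<Rightarrow> int"
  assumes "finite V" "perfect_matching_of V F q" "F \<subseteq> Kset V"
  shows "(\<Sum>e\<in>q. \<Sum>x\<in>e. g x) = (\<Sum>x\<in>V. g x)"
proof -
  have qK: "q \<subseteq> Kset V" using assms unfolding perfect_matching_of_def by auto
  have fq: "finite q" using finite_subset[OF qK finite_Kset[OF assms(1)]] .
  have fe: "\<forall>e\<in>q. finite e" using qK unfolding Kset_def by (auto intro: finite_subset[OF _ assms(1)])
  have uq: "\<Union>q = V"
  proof
    show "\<Union>q \<subseteq> V" using qK unfolding Kset_def by auto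
    show "V \<subseteq> \<Union>q" using assms(2) unfolding perfect_matching_of_def by blast
  qed
  have dj: "\<forall>A\<in>q. \<forall>B\<in>q. A \<noteq> B \<longrightarrow> A \<inter> B = {}"
    using assms(2) uq unfolding perfect_matching_of_def by blast
  have "(\<Sum>x\<in>\<Union>q. g x) = (\<Sum>e\<in>q. \<Sum>x\<in>e. g x)"
    using sum.Union_disjoint[OF fe dj, of g] by simp
  then show ?thesis using uq by simp
qed

lemma bip_sub: "bip_edges V c \<subseteq> Kset V" unfolding bip_edges_def by auto

lemma nbar_cert:
  fixes u :: "'a vec" and w :: "'a set \<Rightarrow> int" and y :: "'a set set \<Rightarrow> 'a \<Rightarrow> int"
  assumes fin: "finite V" and uN: "u \<in> Nbar V (PM V)"
   and cond: "\<And>c e. c \<in> Cset V \<Longrightarrow> snd u c > 0 \<Longrightarrow> e \<in> bip_edges V c \<Longrightarrow> fst u e > 0 \<Longrightarrow> (\<Sum>x\<in>e. y c x) \<le> w e"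
  shows "(\<Sum>c\<in>Cset V. int (snd u c) * (\<Sum>x\<in>V. y c x)) \<le> (\<Sum>e\<in>Kset V. int (fst u e) * w e)"
proof -
  obtain k F lam where k: "k \<ge> 1" and F: "finite F" "F \<subseteq> PM V"
    and eq: "smul k u = ((\<lambda>e. \<Sum>m\<in>F. lam m * fst m e), (\<lambda>c. \<Sum>m\<in>F. lam m * snd m c))"
    using uN unfolding Nbar_def Ncone_def by blast
  have eK0: "(\<lambda>e. k * fst u e) = (\<lambda>e. \<Sum>m\<in>F. lam m * fst m e)"
    using arg_cong[OF eq, of fst] unfolding smul_def by simp
  have eC0: "(\<lambda>c. k * snd u c) = (\<lambda>c. \<Sum>m\<in>F. lam m * snd m c)"
    using arg_cong[OF eq, of snd] unfolding smul_def by simp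
  have eK: "\<And>e. k * fst u e = (\<Sum>m\<in>F. lam m * fst m e)" using fun_cong[OF eK0] by simp
  have eC: "\<And>c. k * snd u c = (\<Sum>m\<in>F. lam m * snd m c)" using fun_cong[OF eC0] by simp
  define Y where "Y c = (\<Sum>x\<in>V. y c x)" for c
  have fK: "finite (Kset V)" and fC: "finite (Cset V)" using fin finite_Kset finite_Cset by auto
  have trm: "int (lam m) * (\<Sum>c\<in>Cset V. int (snd m c) * Y c) \<le> int (lam m) * (\<Sum>e\<in>Kset V. int (fst m e) * w e)"
    if mF: "m \<in> F" for m
  proof (cases "lam m = 0")
    case True then show ?thesis by simp
  next
    case False
    obtain q c where m: "m = chiEc q c" and cC: "c \<in> Cset V" and pm: "perfect_matching_of V (bip_edges V c) q"
      using mF F unfolding PM_def by blast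
    have qB: "q \<subseteq> bip_edges V c" using pm unfolding perfect_matching_of_def by auto
    have qK: "q \<subseteq> Kset V" using qB bip_sub by blast
    have sc: "snd u c > 0"
    proof -
      have "lam m * snd m c \<le> (\<Sum>m\<in>F. lam m * snd m c)"
        by (rule member_le_sum[OF mF]) (auto simp: F)
      moreover have "snd m c = 1" using m unfolding chiEc_def by simp
      ultimately have "lam m \<le> k * snd u c" using eC by simp
      then show ?thesis using False by (cases "snd u c") auto
    qed
    have fe: "fst u e > 0" if "e \<in> q" for e
    proof -
      have "lam m * fst m e \<le> (\<Sum>m\<in>F. lam m * fst m e)"
        by (rule member_le_sum[OF mF]) (auto simp: F)
      moreover have "fst m e = 1" using m that unfolding chiEc_def by simp
      ultimately have "lam m \<le> k * fst u e" using eK by simp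
      then show ?thesis using False by (cases "fst u e") auto
    qed
    have L: "(\<Sum>c'\<in>Cset V. int (snd m c') * Y c') = Y c"
    proof -
      have "(\<Sum>c'\<in>Cset V. int (snd m c') * Y c') = (\<Sum>c'\<in>Cset V. if c' = c then Y c else 0)"
        by (rule sum.cong) (auto simp: m chiEc_def)
      also have "\<dots> = Y c" using cC fC by simp
      finally show ?thesis .
    qed
    have R: "(\<Sum>e\<in>Kset V. int (fst m e) * w e) = (\<Sum>e\<in>q. w e)"
    proof -
      have "(\<Sum>e\<in>Kset V. int (fst m e) * w e) = (\<Sum>e\<in>Kset V. if e \<in> q then w e else 0)"
        by (rule sum.cong) (auto simp: m chiEc_def)
      also have "\<dots> = (\<Sum>e\<in>Kset V \<inter> q. w e)" by (simp add: sum.If_cases fK Int_def)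
      also have "Kset V \<inter> q = q" using qK by blast
      finally show ?thesis .
    qed
    have "Y c = (\<Sum>e\<in>q. \<Sum>x\<in>e. y c x)" unfolding Y_def
      by (rule pm_sum[OF fin pm bip_sub, symmetric])
    also have "\<dots> \<le> (\<Sum>e\<in>q. w e)"
      by (rule sum_mono) (use qB fe cond[OF cC sc] in auto)
    finally show ?thesis using L R by (simp add: mult_left_mono)
  qed
  have "int k * (\<Sum>c\<in>Cset V. int (snd u c) * Y c) = (\<Sum>c\<in>Cset V. int (k * snd u c) * Y c)"
    by (simp add: sum_distrib_left mult.assoc)
  also have "\<dots> = (\<Sum>c\<in>Cset V. \<Sum>m\<in>F. int (lam m) * (int (snd m c) * Y c))"
    by (simp add: eC sum_distrib_right mult.assoc)
  also have "\<dots> = (\<Sum>m\<in>F. int (lam m) * (\<Sum>c\<in>Cset V. int (snd m c) * Y c))"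
    by (subst sum.swap) (simp add: sum_distrib_left)
  also have "\<dots> \<le> (\<Sum>m\<in>F. int (lam m) * (\<Sum>e\<in>Kset V. int (fst m e) * w e))"
    by (rule sum_mono) (rule trm)
  also have "\<dots> = (\<Sum>e\<in>Kset V. \<Sum>m\<in>F. int (lam m) * (int (fst m e) * w e))"
    by (subst sum.swap) (simp add: sum_distrib_left)
  also have "\<dots> = (\<Sum>e\<in>Kset V. int (k * fst u e) * w e)"
    by (simp add: eK sum_distrib_right mult.assoc)
  also have "\<dots> = int k * (\<Sum>e\<in>Kset V. int (fst u e) * w e)"
    by (simp add: sum_distrib_left mult.assoc)
  finally show ?thesis using k unfolding Y_def by (simp add: mult_le_cancel_left)
qed

lemma Kset_finite_e: "e \<in> Kset V \<Longrightarrow> finite e"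
  unfolding Kset_def by (auto intro: card_ge_0_finite)

lemma nbar_deg:
  assumes fin: "finite V" and uN: "u \<in> Nbar V (PM V)" and xV: "x \<in> V"
  shows "(\<Sum>e\<in>{e\<in>Kset V. x\<in>e}. fst u e) = (\<Sum>c\<in>Cset V. snd u c)"
proof -
  have fK: "finite (Kset V)" and fC: "finite (Cset V)" using fin finite_Kset finite_Cset by auto
  have s1: "(\<Sum>z\<in>V. (if z = x then s else 0)) = s" for s :: int using xV fin by simp
  have s2: "(\<Sum>z\<in>e. (if z = x then s else 0)) = (if x \<in> e then s else 0)" if "e \<in> bip_edges V c" for e c and s :: int
  proof -
    have "finite e" using Kset_finite_e that bip_sub by blast
    then show ?thesis by (simp add: sum.delta)
  qed
  have A: "(\<Sum>c\<in>Cset V. int (snd u c) * (\<Sum>z\<in>V. (if z = x then s else 0))) \<le> (\<Sum>e\<in>Kset V. int (fst u e) * (if x \<in> e then s else 0))" for s :: int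
    by (rule nbar_cert[OF fin uN]) (simp add: s2)
  have B: "(\<Sum>e\<in>Kset V. int (fst u e) * (if x \<in> e then s else 0)) = s * int (\<Sum>e\<in>{e\<in>Kset V. x\<in>e}. fst u e)" for s :: int
    by (simp add: sum.inter_filter[OF fK] sum_distrib_left mult.commute if_distrib cong: if_cong)
  have C: "(\<Sum>c\<in>Cset V. int (snd u c) * (\<Sum>z\<in>V. (if z = x then s else 0))) = s * int (\<Sum>c\<in>Cset V. snd u c)" for s :: int
    by (simp add: s1 sum_distrib_left mult.commute)
  have "int (\<Sum>c\<in>Cset V. snd u c) \<le> int (\<Sum>e\<in>{e\<in>Kset V. x\<in>e}. fst u e)"
    using A[of 1] B[of 1] C[of 1] by simp
  moreover have "- int (\<Sum>c\<in>Cset V. snd u c) \<le> - int (\<Sum>e\<in>{e\<in>Kset V. x\<in>e}. fst u e)"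
    using A[of "-1"] B[of "-1"] C[of "-1"] by simp
  ultimately show ?thesis by linarith
qed

lemma nbar_supp:
  assumes fin: "finite V" and uN: "u \<in> Nbar V (PM V)" and pos: "fst u e0 > 0"
  shows "\<exists>c\<in>Cset V. snd u c > 0 \<and> e0 \<in> bip_edges V c"
proof (rule ccontr)
  assume na: "\<not> ?thesis"
  have fK: "finite (Kset V)" using fin finite_Kset by auto
  have e0K: "e0 \<in> Kset V" using uN pos unfolding Nbar_def vecs_def by (auto intro: ccontr)
  have "(\<Sum>c\<in>Cset V. int (snd u c) * (\<Sum>z\<in>V. (\<lambda>c z. 0::int) c z)) \<le> (\<Sum>e\<in>Kset V. int (fst u e) * (if e = e0 then -1 else 0))"
    by (rule nbar_cert[OF fin uN]) (use na in auto)
  also have "\<dots> = - int (fst u e0)" using e0K fK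
    by (simp add: if_distrib cong: if_cong)
  finally show False using pos by simp
qed

definition vzero :: "'a vec" where "vzero = ((\<lambda>_. 0), (\<lambda>_. 0))"
definition vadd :: "'a vec \<Rightarrow> 'a vec \<Rightarrow> 'a vec" where
  "vadd a b = ((\<lambda>e. fst a e + fst b e), (\<lambda>c. snd a c + snd b c))"
definition comb :: "'a vec set \<Rightarrow> ('a vec \<Rightarrow> nat) \<Rightarrow> 'a vec" where
  "comb F lam = ((\<lambda>e. \<Sum>m\<in>F. lam m * fst m e), (\<lambda>c. \<Sum>m\<in>F. lam m * snd m c))"

lemma Ncone_comb: "Ncone M = {v. \<exists>F lam. finite F \<and> F \<subseteq> M \<and> v = comb F lam}"
  unfolding Ncone_def comb_def by simp

lemma comb_empty: "comb {} lam = vzero" unfolding comb_def vzero_def by simp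

lemma comb_insert: "finite F \<Longrightarrow> m \<notin> F \<Longrightarrow> comb (insert m F) lam = vadd (smul (lam m) m) (comb F lam)"
  unfolding comb_def vadd_def smul_def by simp

lemma smul_Suc: "smul (Suc n) m = vadd m (smul n m)" unfolding smul_def vadd_def by simp
lemma smul_0: "smul 0 m = vzero" unfolding smul_def vzero_def by simp

lemma Ncone_sub:
  assumes "M \<subseteq> S" "vzero \<in> S" "\<And>a b. a \<in> S \<Longrightarrow> b \<in> S \<Longrightarrow> vadd a b \<in> S"
  shows "Ncone M \<subseteq> S"
proof
  fix u assume "u \<in> Ncone M"
  then obtain F lam where F: "finite F" "F \<subseteq> M" and u: "u = comb F lam" unfolding Ncone_comb by blast
  have sm: "smul n m \<in> S" if "m \<in> S" for n m
    by (induction n) (auto simp: smul_0 smul_Suc assms(2,3) that)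
  have "comb F lam \<in> S" using F
  proof (induction F rule: finite_induct)
    case empty then show ?case by (simp add: comb_empty assms(2))
  next
    case (insert m F)
    have "m \<in> S" "comb F lam \<in> S" using insert assms(1) by auto
    then show ?case using insert sm assms(3) by (simp add: comb_insert)
  qed
  then show "u \<in> S" using u by simp
qed

lemma Ncone_add: "a \<in> Ncone M \<Longrightarrow> b \<in> Ncone M \<Longrightarrow> vadd a b \<in> Ncone M"
proof -
  assume "a \<in> Ncone M" "b \<in> Ncone M"
  then obtain F1 l1 F2 l2 where F: "finite F1" "F1 \<subseteq> M" "finite F2" "F2 \<subseteq> M"
    and ab: "a = comb F1 l1" "b = comb F2 l2" unfolding Ncone_comb by blast
  define l where "l m = (if m \<in> F1 then l1 m else 0) + (if m \<in> F2 then l2 m else 0)" for m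
  have s: "(\<Sum>m\<in>F1\<union>F2. (if m \<in> G then f m else 0)) = (\<Sum>m\<in>G. f m)" if "G \<subseteq> F1 \<union> F2" for G and f :: "'a vec \<Rightarrow> nat"
    using F that by (simp add: sum.If_cases Int_absorb1)
  have key: "(\<Sum>m\<in>F1\<union>F2. l m * f m) = (\<Sum>m\<in>F1. l1 m * f m) + (\<Sum>m\<in>F2. l2 m * f m)" for f :: "'a vec \<Rightarrow> nat"
  proof -
    have "(\<Sum>m\<in>F1\<union>F2. l m * f m) = (\<Sum>m\<in>F1\<union>F2. (if m\<in>F1 then l1 m * f m else 0) + (if m\<in>F2 then l2 m * f m else 0))"
      by (rule sum.cong) (auto simp: l_def distrib_right)
    also have "\<dots> = (\<Sum>m\<in>F1. l1 m * f m) + (\<Sum>m\<in>F2. l2 m * f m)"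
      by (simp only: sum.distrib s[of F1] s[of F2] Un_upper1 Un_upper2)
    finally show ?thesis .
  qed
  have "vadd a b = comb (F1 \<union> F2) l"
    unfolding ab comb_def vadd_def by (simp add: key fun_eq_iff)
  then show ?thesis unfolding Ncone_comb using F by blast
qed

lemma smul_Ncone: "a \<in> Ncone M \<Longrightarrow> smul k a \<in> Ncone M"
proof -
  assume "a \<in> Ncone M"
  then obtain F l where F: "finite F" "F \<subseteq> M" and a: "a = comb F l" unfolding Ncone_comb by blast
  have "smul k a = comb F (\<lambda>m. k * l m)" unfolding a comb_def smul_def by (simp add: sum_distrib_left mult.assoc)
  then show ?thesis unfolding Ncone_comb using F by blast
qed

lemma smul_vadd: "smul k (vadd a b) = vadd (smul k a) (smul k b)"
  unfolding smul_def vadd_def by (simp add: distrib_left)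
lemma smul_smul: "smul k (smul j a) = smul (k * j) a"
  unfolding smul_def by (simp add: mult.assoc)

lemma vecs_add: "a \<in> vecs V \<Longrightarrow> b \<in> vecs V \<Longrightarrow> vadd a b \<in> vecs V"
  unfolding vecs_def vadd_def by auto

lemma Nbar_add: "a \<in> Nbar V M \<Longrightarrow> b \<in> Nbar V M \<Longrightarrow> vadd a b \<in> Nbar V M"
proof -
  assume a: "a \<in> Nbar V M" and b: "b \<in> Nbar V M"
  obtain k j where k: "k \<ge> 1" "smul k a \<in> Ncone M" and j: "j \<ge> 1" "smul j b \<in> Ncone M"
    using a b unfolding Nbar_def by blast
  have "smul (j * k) (vadd a b) = vadd (smul j (smul k a)) (smul k (smul j b))"
    by (simp add: smul_vadd smul_smul mult.commute)
  also have "\<dots> \<in> Ncone M" by (intro Ncone_add smul_Ncone k j)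
  finally have "smul (j * k) (vadd a b) \<in> Ncone M" .
  moreover have "j * k \<ge> 1" using k j by simp
  moreover have "vadd a b \<in> vecs V" using a b vecs_add unfolding Nbar_def by blast
  ultimately show ?thesis unfolding Nbar_def by blast
qed

lemma vzero_Nbar: "vzero \<in> Nbar V M"
proof -
  have "smul 1 vzero = comb {} (\<lambda>_. 0)" by (simp add: comb_empty smul_def vzero_def)
  then have "smul 1 vzero \<in> Ncone M" unfolding Ncone_comb by blast
  moreover have "vzero \<in> vecs V" unfolding vecs_def vzero_def by simp
  ultimately show ?thesis unfolding Nbar_def by auto
qed

definition irred :: "'a vec set \<Rightarrow> 'a vec \<Rightarrow> bool" where
  "irred S v \<longleftrightarrow> v \<in> S \<and> v \<noteq> vzero \<and> (\<forall>a\<in>S. \<forall>b\<in>S. v = vadd a b \<longrightarrow> a = vzero \<or> b = vzero)"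

lemma irred_comb:
  assumes ir: "irred S h" and F: "finite F" "F \<subseteq> S" and h: "h = comb F lam"
   and z: "vzero \<in> S" and cl: "\<And>a b. a \<in> S \<Longrightarrow> b \<in> S \<Longrightarrow> vadd a b \<in> S"
  shows "h \<in> F"
proof -
  have "\<exists>m\<in>F. lam m > 0 \<and> m \<noteq> vzero"
  proof (rule ccontr)
    assume na: "\<not> ?thesis"
    have z1: "lam m * fst m e = 0" "lam m * snd m c = 0" if "m \<in> F" for m e c
      using na that by (auto simp: vzero_def)
    have "(\<Sum>m\<in>F. lam m * fst m e) = 0" "(\<Sum>m\<in>F. lam m * snd m c) = 0" for e c
      using z1 by (auto intro!: sum.neutral simp del: mult_is_0)
    then have "h = vzero" unfolding h comb_def vzero_def by (simp add: fun_eq_iff)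
    then show False using ir unfolding irred_def by simp
  qed
  then obtain m where m: "m \<in> F" "lam m > 0" "m \<noteq> vzero" by blast
  define rest where "rest = comb F (lam(m := lam m - 1))"
  have rS: "rest \<in> S" using Ncone_sub[OF F(2) z cl] F unfolding rest_def Ncone_comb by blast
  have e1: "(\<Sum>m'\<in>F. (lam(m := lam m - 1)) m' * f m') + f m = (\<Sum>m'\<in>F. lam m' * f m')" for f :: "'a vec \<Rightarrow> nat"
  proof -
    have "(\<Sum>m'\<in>F. (lam(m := lam m - 1)) m' * f m') = (lam m - 1) * f m + (\<Sum>m'\<in>F-{m}. lam m' * f m')"
      using F m by (simp add: sum.remove)
    moreover have "(\<Sum>m'\<in>F. lam m' * f m') = lam m * f m + (\<Sum>m'\<in>F-{m}. lam m' * f m')"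
      using F m by (simp add: sum.remove)
    moreover have "(lam m - 1) * f m + f m = lam m * f m" using m(2)
      by (cases "lam m") auto
    ultimately show ?thesis by simp
  qed
  have A: "(\<Sum>m\<in>F. lam m * fst m e) = fst m e + (\<Sum>m'\<in>F. (lam(m := lam m - 1)) m' * fst m' e)" for e
    using e1[of "\<lambda>m'. fst m' e"] by linarith
  have B: "(\<Sum>m\<in>F. lam m * snd m c) = snd m c + (\<Sum>m'\<in>F. (lam(m := lam m - 1)) m' * snd m' c)" for c
    using e1[of "\<lambda>m'. snd m' c"] by linarith
  have "h = vadd m rest" unfolding h rest_def comb_def vadd_def by (simp only: A B fst_conv snd_conv)
  then have "rest = vzero" using ir m rS F unfolding irred_def by blast
  then have "h = m" using \<open>h = vadd m rest\<close> unfolding vadd_def vzero_def by simp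
  then show ?thesis using m by simp
qed

definition vsize :: "'a set \<Rightarrow> 'a vec \<Rightarrow> nat" where
  "vsize V u = (\<Sum>e\<in>Kset V. fst u e) + (\<Sum>c\<in>Cset V. snd u c)"

lemma vsize_add: "vsize V (vadd a b) = vsize V a + vsize V b"
  unfolding vsize_def vadd_def by (simp add: sum.distrib)

lemma vsize_0:
  assumes fin: "finite V" and u: "u \<in> vecs V" and z: "vsize V u = 0"
  shows "u = vzero"
proof -
  have "fst u e = 0" for e
  proof (cases "e \<in> Kset V")
    case True
    have "finite (Kset V)" using fin finite_Kset by blast
    then show ?thesis using z True unfolding vsize_def by simp
  next
    case False then show ?thesis using u unfolding vecs_def by auto
  qed
  moreover have "snd u c = 0" for c
  proof (cases "c \<in> Cset V")
    case True
    have "finite (Cset V)" using fin finite_Cset by blast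
    then show ?thesis using z True unfolding vsize_def by simp
  next
    case False then show ?thesis using u unfolding vecs_def by auto
  qed
  ultimately show ?thesis unfolding vzero_def by (simp add: prod_eq_iff fun_eq_iff)
qed

lemma PM_Nbar: "m \<in> PM V \<Longrightarrow> m \<in> Nbar V (PM V)"
proof -
  assume m: "m \<in> PM V"
  then obtain q c where mq: "m = chiEc q c" "c \<in> Cset V" "perfect_matching_of V (bip_edges V c) q"
    unfolding PM_def by blast
  have "q \<subseteq> Kset V" using mq(3) bip_sub unfolding perfect_matching_of_def by blast
  then have "m \<in> vecs V" using mq unfolding vecs_def chiEc_def by auto
  moreover have "smul 1 m = comb {m} (\<lambda>_. 1)" unfolding smul_def comb_def by simp
  then have "smul 1 m \<in> Ncone (PM V)" unfolding Ncone_comb using m by blast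
  ultimately show ?thesis unfolding Nbar_def by auto
qed

lemma irred_hilbert:
  assumes fin: "finite V" and ir: "irred (Nbar V (PM V)) v"
  shows "v \<in> hilbert_basis (Nbar V (PM V))"
proof -
  let ?S = "Nbar V (PM V)"
  define H where "H = {h. irred ?S h}"
  have zS: "vzero \<in> ?S" by (rule vzero_Nbar)
  have cl: "\<And>a b. a \<in> ?S \<Longrightarrow> b \<in> ?S \<Longrightarrow> vadd a b \<in> ?S" by (rule Nbar_add)
  have HS: "H \<subseteq> ?S" unfolding H_def irred_def by auto
  have gen: "\<forall>u. u \<in> ?S \<longrightarrow> vsize V u = n \<longrightarrow> u \<in> Ncone H" for n
  proof (induction n rule: less_induct)
    case (less n)
    show ?case
    proof (intro allI impI)
      fix u assume uS: "u \<in> ?S" and un: "vsize V u = n"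
      show "u \<in> Ncone H"
      proof (cases "u = vzero")
        case True
        then have "u = comb {} (\<lambda>_. 0)" by (simp add: comb_empty)
        then show ?thesis unfolding Ncone_comb by blast
      next
        case nz: False
        show ?thesis
        proof (cases "irred ?S u")
          case True
          have "u = comb {u} (\<lambda>_. 1)" unfolding comb_def by simp
          then show ?thesis unfolding Ncone_comb using True H_def by blast
        next
          case False
          then obtain a b where ab: "a \<in> ?S" "b \<in> ?S" "u = vadd a b" "a \<noteq> vzero" "b \<noteq> vzero"
            using uS nz unfolding irred_def by blast
          have av: "a \<in> vecs V" "b \<in> vecs V" using ab unfolding Nbar_def by auto
          have "vsize V a \<noteq> 0" "vsize V b \<noteq> 0" using vsize_0[OF fin] av ab by blast+
          moreover have "vsize V u = vsize V a + vsize V b" using ab vsize_add by simp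
          ultimately have "vsize V a < n" "vsize V b < n" using un by auto
          then have "a \<in> Ncone H" "b \<in> Ncone H" using less ab by blast+
          then show ?thesis using ab Ncone_add by simp
        qed
      qed
    qed
  qed
  have "min_generating ?S H"
    unfolding min_generating_def
  proof (intro conjI allI impI)
    show "H \<subseteq> ?S" by (rule HS)
    show "Ncone H = ?S"
    proof
      show "Ncone H \<subseteq> ?S" by (rule Ncone_sub[OF HS zS cl])
      show "?S \<subseteq> Ncone H" using gen by blast
    qed
    fix H' assume H': "H' \<subset> H"
    then obtain h where h: "h \<in> H" "h \<notin> H'" by blast
    show "Ncone H' \<noteq> ?S"
    proof
      assume eq: "Ncone H' = ?S"
      have "h \<in> ?S" using h HS by blast
      then obtain F lam where F: "finite F" "F \<subseteq> H'" "h = comb F lam" using eq unfolding Ncone_comb by blast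
      have "F \<subseteq> ?S" using F H' HS by blast
      then have "h \<in> F" using irred_comb[OF _ F(1) _ F(3) zS cl] h unfolding H_def by blast
      then show False using F h by blast
    qed
  qed
  then show ?thesis using ir unfolding hilbert_basis_def H_def by blast
qed

lemma irred_not_Ncone:
  assumes ir: "irred (Nbar V (PM V)) v" and nv: "v \<notin> PM V"
  shows "v \<notin> Ncone (PM V)"
proof
  assume "v \<in> Ncone (PM V)"
  then obtain F lam where F: "finite F" "F \<subseteq> PM V" "v = comb F lam" unfolding Ncone_comb by blast
  have "F \<subseteq> Nbar V (PM V)" using F PM_Nbar by blast
  then have "v \<in> F" using irred_comb[OF ir F(1) _ F(3) vzero_Nbar Nbar_add] by blast
  then show False using F nv by blast
qed

lemma nbar_zero:
  assumes fin: "finite V" and uN: "u \<in> Nbar V (PM V)" and z: "\<forall>c\<in>Cset V. snd u c = 0"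
  shows "u = vzero"
proof -
  have uv: "u \<in> vecs V" using uN unfolding Nbar_def by auto
  have fK: "finite (Kset V)" using fin finite_Kset by blast
  have sz: "(\<Sum>c\<in>Cset V. snd u c) = 0" using z by simp
  have "fst u e = 0" for e
  proof (cases "e \<in> Kset V")
    case True
    then have "card e = 2" "e \<subseteq> V" unfolding Kset_def by auto
    then obtain x where x: "x \<in> e" by (metis card.empty ex_in_conv zero_neq_numeral)
    then have xV: "x \<in> V" using \<open>e \<subseteq> V\<close> by blast
    have "(\<Sum>e\<in>{e\<in>Kset V. x\<in>e}. fst u e) = 0" using nbar_deg[OF fin uN xV] sz by simp
    moreover have "finite {e\<in>Kset V. x\<in>e}" using fK by simp
    ultimately show ?thesis using True x by simp
  next
    case False then show ?thesis using uv unfolding vecs_def by auto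
  qed
  moreover have "snd u c = 0" for c
    using z uv unfolding vecs_def by (cases "c \<in> Cset V") auto
  ultimately show ?thesis unfolding vzero_def by (simp add: prod_eq_iff fun_eq_iff)
qed

lemma hall:
  assumes fin: "finite V" and uN: "u \<in> Nbar V (PM V)" and cC: "c \<in> Cset V" and sc: "snd u c \<ge> 1"
    and V: "p \<in> V" "q \<in> V" "r \<in> V" "p \<noteq> q" "p \<noteq> r" "q \<noteq> r"
    and cond: "\<And>e. e \<in> bip_edges V c \<Longrightarrow> fst u e > 0 \<Longrightarrow> p \<in> e \<or> q \<in> e \<Longrightarrow> r \<in> e \<and> \<not> (p \<in> e \<and> q \<in> e)"
  shows False
proof -
  define yy :: "'a \<Rightarrow> int" where "yy x = (if x = p then 1 else 0) + (if x = q then 1 else 0) - (if x = r then 1 else 0)" for x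
  define y where "y c' x = (if c' = c then yy x else 0)" for c' x
  have fK: "finite (Kset V)" and fC: "finite (Cset V)" using fin finite_Kset finite_Cset by auto
  have sumyy: "(\<Sum>x\<in>A. yy x) = (if p \<in> A then 1 else 0) + (if q \<in> A then 1 else 0) - (if r \<in> A then 1 else 0)"
    if "finite A" for A
    unfolding yy_def using that by (simp add: sum.distrib sum_subtractf)
  have "(\<Sum>c'\<in>Cset V. int (snd u c') * (\<Sum>x\<in>V. y c' x)) \<le> (\<Sum>e\<in>Kset V. int (fst u e) * (\<lambda>_. 0) e)"
  proof (rule nbar_cert[OF fin uN])
    fix c' e assume a: "c' \<in> Cset V" "0 < snd u c'" "e \<in> bip_edges V c'" "0 < fst u e"
    show "(\<Sum>x\<in>e. y c' x) \<le> 0"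
    proof (cases "c' = c")
      case True
      have fe: "finite e" using a(3) bip_sub Kset_finite_e by blast
      have "(\<Sum>x\<in>e. y c' x) = (\<Sum>x\<in>e. yy x)" unfolding y_def using True by simp
      also have "\<dots> \<le> 0" using sumyy[OF fe] cond[of e] a True by auto
      finally show ?thesis .
    next
      case False then show ?thesis unfolding y_def by simp
    qed
  qed
  moreover have "(\<Sum>c'\<in>Cset V. int (snd u c') * (\<Sum>x\<in>V. y c' x)) = int (snd u c)"
  proof -
    have "(\<Sum>c'\<in>Cset V. int (snd u c') * (\<Sum>x\<in>V. y c' x)) = (\<Sum>c'\<in>Cset V. if c' = c then int (snd u c) else 0)"
      by (rule sum.cong) (auto simp: y_def sumyy[OF fin] V)
    also have "\<dots> = int (snd u c)" using fC cC by simp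
    finally show ?thesis .
  qed
  ultimately show False using sc by simp
qed

lemma vadd_split: "v = vadd a b \<Longrightarrow> fst v e = fst a e + fst b e \<and> snd v c = snd a c + snd b c"
  by (simp add: vadd_def)

lemma vadd_comm: "vadd a b = vadd b a" unfolding vadd_def by (simp add: add.commute)



definition Gl :: "nat set list" where "Gl = [{0,11}, {0,12}, {0,15}, {1,11}, {1,13}, {1,16}, {2,10}, {2,12}, {2,16}, {3,17}, {3,18}, {3,19}, {4,13}, {4,14}, {4,19}, {5,14}, {5,16}, {5,18}, {6,10}, {6,13}, {6,15}, {7,11}, {7,12}, {7,17}, {8,10}, {8,18}, {8,19}, {9,14}, {9,15}, {9,17}]"
definition G :: "nat set set" where "G = set Gl"
definition H0 :: "nat set" where "H0 = {4,5,7,8,9,10,11,15,16,18}"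
definition c0 :: "nat set set" where "c0 = {H0, {0..<20} - H0}"
definition q00 :: "nat set list" where "q00 = [{0,11}, {1,16}, {2,10}, {3,18}, {4,13}, {5,14}, {6,15}, {7,12}, {8,19}, {9,17}]"
definition q01 :: "nat set list" where "q01 = [{0,15}, {1,11}, {2,16}, {3,18}, {4,13}, {5,14}, {6,10}, {7,12}, {8,19}, {9,17}]"
definition H1 :: "nat set" where "H1 = {0,1,2,3,6,9,14,16,17,18}"
definition c1 :: "nat set set" where "c1 = {H1, {0..<20} - H1}"
definition q10 :: "nat set list" where "q10 = [{0,11}, {1,13}, {2,12}, {3,19}, {4,14}, {5,16}, {6,10}, {7,17}, {8,18}, {9,15}]"
definition q11 :: "nat set list" where "q11 = [{0,12}, {1,11}, {2,10}, {3,19}, {4,14}, {5,16}, {6,13}, {7,17}, {8,18}, {9,15}]"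
definition H2 :: "nat set" where "H2 = {7,8,9,12,13,15,16,17,18,19}"
definition c2 :: "nat set set" where "c2 = {H2, {0..<20} - H2}"
definition q20 :: "nat set list" where "q20 = [{0,12}, {1,13}, {2,16}, {3,17}, {4,19}, {5,18}, {6,15}, {7,11}, {8,10}, {9,14}]"
definition q21 :: "nat set list" where "q21 = [{0,15}, {1,16}, {2,12}, {3,17}, {4,19}, {5,18}, {6,13}, {7,11}, {8,10}, {9,14}]"

lemma V20: "{0..<20::nat} = {0,1,2,3,4,5,6,7,8,9,10,11,12,13,14,15,16,17,18,19}"
  by (simp add: atLeastLessThan_upt numeral_eq_Suc upt_Suc)

lemma all20: "(\<forall>x\<in>{0..<20::nat}. P x) \<longleftrightarrow> P 0 \<and> P 1 \<and> P 2 \<and> P 3 \<and> P 4 \<and> P 5 \<and> P 6 \<and> P 7 \<and> P 8 \<and> P 9 \<and> P 10 \<and> P 11 \<and> P 12 \<and> P 13 \<and> P 14 \<and> P 15 \<and> P 16 \<and> P 17 \<and> P 18 \<and> P 19"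
  unfolding V20 by simp

lemma distinct_Gl: "distinct Gl"
  unfolding Gl_def by (simp add: doubleton_eq_iff)

lemma G_Kset: "G \<subseteq> Kset {0..<20}"
  unfolding G_def Gl_def Kset_def by simp

lemma bip_iff:
  assumes "H \<subseteq> V" "a \<in> V" "b \<in> V" "a \<noteq> b"
  shows "{a,b} \<in> bip_edges V {H, V - H} \<longleftrightarrow> (a \<in> H \<longleftrightarrow> b \<notin> H)"
  using assms unfolding bip_edges_def Kset_def
  by (cases "a \<in> H"; cases "b \<in> H") (auto simp: Int_insert_left)

lemma c_Cset: "H \<subseteq> {0..<20} \<Longrightarrow> card H = 10 \<Longrightarrow> {H, {0..<20} - H} \<in> Cset {0..<20::nat}"
  unfolding Cset_def by auto

lemma H_sub: "H0 \<subseteq> {0..<20}" "H1 \<subseteq> {0..<20}" "H2 \<subseteq> {0..<20}"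
  unfolding H0_def H1_def H2_def by auto

lemma cC: "c0 \<in> Cset {0..<20}" "c1 \<in> Cset {0..<20}" "c2 \<in> Cset {0..<20}"
  unfolding c0_def c1_def c2_def by (rule c_Cset, simp add: H_sub, simp add: H0_def H1_def H2_def)+

lemma c_ne_aux: "x \<in> H \<Longrightarrow> x \<notin> H' \<Longrightarrow> y \<in> H \<Longrightarrow> y \<in> H' \<Longrightarrow> {H, V - H} \<noteq> {H', V - (H'::nat set)}"
  by (auto simp: doubleton_eq_iff)

lemma c_ne01: "c0 \<noteq> c1" unfolding c0_def c1_def
  by (rule c_ne_aux[of 4 _ _ 9]; simp add: H0_def H1_def)
lemma c_ne02: "c0 \<noteq> c2" unfolding c0_def c2_def
  by (rule c_ne_aux[of 4 _ _ 7]; simp add: H0_def H2_def)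
lemma c_ne12: "c1 \<noteq> c2" unfolding c1_def c2_def
  by (rule c_ne_aux[of 0 _ _ 9]; simp add: H1_def H2_def)
lemmas c_ne = c_ne01 c_ne02 c_ne12

lemma star:
  assumes "\<And>e. e \<notin> G \<Longrightarrow> f e = 0"
  shows "(\<Sum>e\<in>{e\<in>Kset {0..<20}. x\<in>e}. f e) = sum_list (map (\<lambda>e. if x \<in> e then f e else 0) Gl)"
proof -
  have fK: "finite (Kset {0..<20::nat})" by (rule finite_Kset) simp
  have "(\<Sum>e\<in>{e\<in>Kset {0..<20}. x\<in>e}. f e) = (\<Sum>e\<in>Kset {0..<20}. if x \<in> e then f e else 0)"
    by (rule sum.inter_filter[OF fK])
  also have "\<dots> = (\<Sum>e\<in>G. if x \<in> e then f e else 0)"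
    by (rule sum.mono_neutral_right[OF fK G_Kset]) (use assms in auto)
  also have "\<dots> = sum_list (map (\<lambda>e. if x \<in> e then f e else 0) Gl)"
    unfolding G_def by (rule sum_list_distinct_conv_sum_set[OF distinct_Gl, symmetric])
  finally show ?thesis .
qed

lemma deg_G: "x \<in> {0..<20} \<Longrightarrow> degree G x = 3"
proof -
  assume x: "x \<in> {0..<20}"
  have "degree G x = length (filter (\<lambda>e. x \<in> e) Gl)"
    unfolding degree_def G_def using distinct_card[of "filter (\<lambda>e. x \<in> e) Gl"] distinct_Gl
    by simp
  also have "\<dots> = 3" using x unfolding V20 Gl_def by auto
  finally show ?thesis .
qed

lemma pm_list:
  assumes "distinct ql" "set ql \<subseteq> F" "\<forall>x\<in>V. length (filter (\<lambda>e. x \<in> e) ql) = 1"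
  shows "perfect_matching_of V F (set ql)"
  unfolding perfect_matching_of_def
proof (intro conjI ballI)
  show "set ql \<subseteq> F" by (rule assms(2))
  fix x assume x: "x \<in> V"
  have d: "distinct (filter (\<lambda>e. x \<in> e) ql)" using assms(1) by simp
  have "card (set (filter (\<lambda>e. x \<in> e) ql)) = 1"
    using distinct_card[OF d] assms(3) x by simp
  moreover have "set (filter (\<lambda>e. x \<in> e) ql) = {e \<in> set ql. x \<in> e}" by simp
  ultimately have "card {e \<in> set ql. x \<in> e} = Suc 0" by simp
  then obtain e0 where "{e \<in> set ql. x \<in> e} = {e0}" unfolding card_1_singleton_iff by blast
  then have eq: "\<And>e. (e \<in> set ql \<and> x \<in> e) = (e = e0)" by (simp add: set_eq_iff)
  show "\<exists>!e. e \<in> set ql \<and> x \<in> e" by (rule ex1I[of _ e0]) (simp_all add: eq)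
qed

definition vv :: "nat vec" where
  "vv = ((\<lambda>e. if e \<in> G then 1 else 0), (\<lambda>c. if c \<in> {c0,c1,c2} then 1 else 0))"

lemma bipc: "a \<in> {0..<20} \<Longrightarrow> b \<in> {0..<20} \<Longrightarrow> a \<noteq> b \<Longrightarrow>
   ({a,b} \<in> bip_edges {0..<20} c0 \<longleftrightarrow> (a \<in> H0 \<longleftrightarrow> b \<notin> H0)) \<and>
   ({a,b} \<in> bip_edges {0..<20} c1 \<longleftrightarrow> (a \<in> H1 \<longleftrightarrow> b \<notin> H1)) \<and>
   ({a,b} \<in> bip_edges {0..<20} c2 \<longleftrightarrow> (a \<in> H2 \<longleftrightarrow> b \<notin> H2))"
  unfolding c0_def c1_def c2_def using bip_iff[OF H_sub(1)] bip_iff[OF H_sub(2)] bip_iff[OF H_sub(3)] by blast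

lemma PM_q00: "chiEc (set q00) c0 \<in> PM {0..<20}"
proof -
  have "set q00 \<subseteq> bip_edges {0..<20} c0" unfolding q00_def by (simp add: bipc H0_def)
  moreover have "distinct q00" unfolding q00_def by (simp add: doubleton_eq_iff)
  moreover have "\<forall>x\<in>{0..<20}. length (filter (\<lambda>e. x \<in> e) q00) = 1" unfolding all20 q00_def by simp
  ultimately show ?thesis unfolding PM_def using cC(1) pm_list by blast
qed

lemma sub_q00: "set q00 \<subseteq> G" unfolding q00_def G_def Gl_def by (simp add: doubleton_eq_iff)

lemma PM_q01: "chiEc (set q01) c0 \<in> PM {0..<20}"
proof -
  have "set q01 \<subseteq> bip_edges {0..<20} c0" unfolding q01_def by (simp add: bipc H0_def)
  moreover have "distinct q01" unfolding q01_def by (simp add: doubleton_eq_iff)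
  moreover have "\<forall>x\<in>{0..<20}. length (filter (\<lambda>e. x \<in> e) q01) = 1" unfolding all20 q01_def by simp
  ultimately show ?thesis unfolding PM_def using cC(1) pm_list by blast
qed

lemma sub_q01: "set q01 \<subseteq> G" unfolding q01_def G_def Gl_def by (simp add: doubleton_eq_iff)

lemma PM_q10: "chiEc (set q10) c1 \<in> PM {0..<20}"
proof -
  have "set q10 \<subseteq> bip_edges {0..<20} c1" unfolding q10_def by (simp add: bipc H1_def)
  moreover have "distinct q10" unfolding q10_def by (simp add: doubleton_eq_iff)
  moreover have "\<forall>x\<in>{0..<20}. length (filter (\<lambda>e. x \<in> e) q10) = 1" unfolding all20 q10_def by simp
  ultimately show ?thesis unfolding PM_def using cC(2) pm_list by blast
qed

lemma sub_q10: "set q10 \<subseteq> G" unfolding q10_def G_def Gl_def by (simp add: doubleton_eq_iff)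

lemma PM_q11: "chiEc (set q11) c1 \<in> PM {0..<20}"
proof -
  have "set q11 \<subseteq> bip_edges {0..<20} c1" unfolding q11_def by (simp add: bipc H1_def)
  moreover have "distinct q11" unfolding q11_def by (simp add: doubleton_eq_iff)
  moreover have "\<forall>x\<in>{0..<20}. length (filter (\<lambda>e. x \<in> e) q11) = 1" unfolding all20 q11_def by simp
  ultimately show ?thesis unfolding PM_def using cC(2) pm_list by blast
qed

lemma sub_q11: "set q11 \<subseteq> G" unfolding q11_def G_def Gl_def by (simp add: doubleton_eq_iff)

lemma PM_q20: "chiEc (set q20) c2 \<in> PM {0..<20}"
proof -
  have "set q20 \<subseteq> bip_edges {0..<20} c2" unfolding q20_def by (simp add: bipc H2_def)
  moreover have "distinct q20" unfolding q20_def by (simp add: doubleton_eq_iff)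
  moreover have "\<forall>x\<in>{0..<20}. length (filter (\<lambda>e. x \<in> e) q20) = 1" unfolding all20 q20_def by simp
  ultimately show ?thesis unfolding PM_def using cC(3) pm_list by blast
qed

lemma sub_q20: "set q20 \<subseteq> G" unfolding q20_def G_def Gl_def by (simp add: doubleton_eq_iff)

lemma PM_q21: "chiEc (set q21) c2 \<in> PM {0..<20}"
proof -
  have "set q21 \<subseteq> bip_edges {0..<20} c2" unfolding q21_def by (simp add: bipc H2_def)
  moreover have "distinct q21" unfolding q21_def by (simp add: doubleton_eq_iff)
  moreover have "\<forall>x\<in>{0..<20}. length (filter (\<lambda>e. x \<in> e) q21) = 1" unfolding all20 q21_def by simp
  ultimately show ?thesis unfolding PM_def using cC(3) pm_list by blast
qed

lemma sub_q21: "set q21 \<subseteq> G" unfolding q21_def G_def Gl_def by (simp add: doubleton_eq_iff)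

lemma twice: "smul 2 vv = vadd (chiEc (set q00) c0) (vadd (chiEc (set q01) c0) (vadd (chiEc (set q10) c1)
   (vadd (chiEc (set q11) c1) (vadd (chiEc (set q20) c2) (chiEc (set q21) c2)))))"
proof -
  have A: "2 * (if e \<in> G then 1 else 0) = (if e \<in> set q00 then 1 else 0) + ((if e \<in> set q01 then 1 else 0)
     + ((if e \<in> set q10 then 1 else 0) + ((if e \<in> set q11 then 1 else 0) + ((if e \<in> set q20 then 1 else 0)
     + (if e \<in> set q21 then (1::nat) else 0)))))" for e
  proof (cases "e \<in> G")
    case True
    have "\<forall>e\<in>set Gl. 2 * (if e \<in> G then 1 else 0) = (if e \<in> set q00 then 1 else 0) + ((if e \<in> set q01 then 1 else 0)
     + ((if e \<in> set q10 then 1 else 0) + ((if e \<in> set q11 then 1 else 0) + ((if e \<in> set q20 then 1 else 0)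
     + (if e \<in> set q21 then (1::nat) else 0)))))"
      unfolding G_def Gl_def q00_def q01_def q10_def q11_def q20_def q21_def by (simp add: doubleton_eq_iff)
    then show ?thesis using True unfolding G_def by blast
  next
    case False
    then show ?thesis using sub_q00 sub_q01 sub_q10 sub_q11 sub_q20 sub_q21 by auto
  qed
  show ?thesis unfolding smul_def vadd_def vv_def chiEc_def
    by (simp add: A fun_eq_iff c_ne c_ne[symmetric])
qed



abbreviation SS :: "nat vec set" where "SS \<equiv> Nbar {0..<20} (PM {0..<20})"

lemma key0:
  assumes aS: "a \<in> SS" and bS: "b \<in> SS" and vab: "vv = vadd a b"
    and s: "snd a c0 = 1" "snd a c1 = 0" "snd a c2 = 0"
  shows False
proof -
  have fin: "finite {0..<20::nat}" by simp
  have fa: "fst a e + fst b e = (if e \<in> G then 1 else 0)" for e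
    using vadd_split[OF vab, of e] unfolding vv_def by simp
  have sb: "snd a c + snd b c = (if c \<in> {c0,c1,c2} then 1 else 0)" for c
    using vadd_split[OF vab, of _ c] unfolding vv_def by simp
  have aG: "fst a e = 0" if "e \<notin> G" for e using fa[of e] that by simp
  have sa: "snd a c = (if c = c0 then 1 else 0)" for c
    using sb[of c] s by (cases "c = c0 \<or> c = c1 \<or> c = c2") auto
  have da: "(\<Sum>c\<in>Cset {0..<20}. snd a c) = 1"
    unfolding sa using finite_Cset[OF fin] cC by simp
  have deg: "sum_list (map (\<lambda>e. if x \<in> e then fst a e else 0) Gl) = 1" if "x \<in> {0..<20}" for x
    using nbar_deg[OF fin aS that] star[of "fst a", OF aG] da by simp
  have only: "e \<in> bip_edges {0..<20} c0" if "fst a e > 0" for e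
    using nbar_supp[OF fin aS that] sa by (auto split: if_splits)
  have sbj: "snd b c2 \<ge> 1" using sb[of c2] sa c_ne by auto
  have D0: "fst a {0,11} + fst a {0,12} + fst a {0,15} = 1" using deg[of 0] unfolding Gl_def by (simp add: add.assoc)
  have D1: "fst a {1,11} + fst a {1,13} + fst a {1,16} = 1" using deg[of 1] unfolding Gl_def by (simp add: add.assoc)
  have D2: "fst a {2,10} + fst a {2,12} + fst a {2,16} = 1" using deg[of 2] unfolding Gl_def by (simp add: add.assoc)
  have D3: "fst a {3,17} + fst a {3,18} + fst a {3,19} = 1" using deg[of 3] unfolding Gl_def by (simp add: add.assoc)
  have D4: "fst a {4,13} + fst a {4,14} + fst a {4,19} = 1" using deg[of 4] unfolding Gl_def by (simp add: add.assoc)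
  have D5: "fst a {5,14} + fst a {5,16} + fst a {5,18} = 1" using deg[of 5] unfolding Gl_def by (simp add: add.assoc)
  have D6: "fst a {6,10} + fst a {6,13} + fst a {6,15} = 1" using deg[of 6] unfolding Gl_def by (simp add: add.assoc)
  have D7: "fst a {7,11} + fst a {7,12} + fst a {7,17} = 1" using deg[of 7] unfolding Gl_def by (simp add: add.assoc)
  have D8: "fst a {8,10} + fst a {8,18} + fst a {8,19} = 1" using deg[of 8] unfolding Gl_def by (simp add: add.assoc)
  have D9: "fst a {9,14} + fst a {9,15} + fst a {9,17} = 1" using deg[of 9] unfolding Gl_def by (simp add: add.assoc)
  have D10: "fst a {2,10} + fst a {6,10} + fst a {8,10} = 1" using deg[of 10] unfolding Gl_def by (simp add: add.assoc)
  have D11: "fst a {0,11} + fst a {1,11} + fst a {7,11} = 1" using deg[of 11] unfolding Gl_def by (simp add: add.assoc)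
  have D12: "fst a {0,12} + fst a {2,12} + fst a {7,12} = 1" using deg[of 12] unfolding Gl_def by (simp add: add.assoc)
  have D13: "fst a {1,13} + fst a {4,13} + fst a {6,13} = 1" using deg[of 13] unfolding Gl_def by (simp add: add.assoc)
  have D14: "fst a {4,14} + fst a {5,14} + fst a {9,14} = 1" using deg[of 14] unfolding Gl_def by (simp add: add.assoc)
  have D15: "fst a {0,15} + fst a {6,15} + fst a {9,15} = 1" using deg[of 15] unfolding Gl_def by (simp add: add.assoc)
  have D16: "fst a {1,16} + fst a {2,16} + fst a {5,16} = 1" using deg[of 16] unfolding Gl_def by (simp add: add.assoc)
  have D17: "fst a {3,17} + fst a {7,17} + fst a {9,17} = 1" using deg[of 17] unfolding Gl_def by (simp add: add.assoc)
  have D18: "fst a {3,18} + fst a {5,18} + fst a {8,18} = 1" using deg[of 18] unfolding Gl_def by (simp add: add.assoc)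
  have D19: "fst a {3,19} + fst a {4,19} + fst a {8,19} = 1" using deg[of 19] unfolding Gl_def by (simp add: add.assoc)
  have Z0: "fst a {0,12} = 0" using only[of "{0,12}"] by (auto simp: bipc H0_def)
  have Z1: "fst a {1,13} = 0" using only[of "{1,13}"] by (auto simp: bipc H0_def)
  have Z2: "fst a {2,12} = 0" using only[of "{2,12}"] by (auto simp: bipc H0_def)
  have Z3: "fst a {3,17} = 0" using only[of "{3,17}"] by (auto simp: bipc H0_def)
  have Z4: "fst a {3,19} = 0" using only[of "{3,19}"] by (auto simp: bipc H0_def)
  have Z5: "fst a {5,16} = 0" using only[of "{5,16}"] by (auto simp: bipc H0_def)
  have Z6: "fst a {5,18} = 0" using only[of "{5,18}"] by (auto simp: bipc H0_def)
  have Z7: "fst a {6,13} = 0" using only[of "{6,13}"] by (auto simp: bipc H0_def)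
  have Z8: "fst a {7,11} = 0" using only[of "{7,11}"] by (auto simp: bipc H0_def)
  have Z9: "fst a {8,10} = 0" using only[of "{8,10}"] by (auto simp: bipc H0_def)
  have Z10: "fst a {8,18} = 0" using only[of "{8,18}"] by (auto simp: bipc H0_def)
  have Z11: "fst a {9,15} = 0" using only[of "{9,15}"] by (auto simp: bipc H0_def)
  have tb: "fst a {0,11} \<le> 1" using fa[of "{0,11}"] unfolding G_def Gl_def by simp
  have "fst a {0,11} = 1 \<or> fst a {0,11} = 0" using tb by linarith
  then show False
  proof
    assume t: "fst a {0,11} = 1"
    have A0: "fst a {1,16} = 1" using t D0 D1 D2 D3 D4 D5 D6 D7 D8 D9 D10 D11 D12 D13 D14 D15 D16 D17 D18 D19 Z0 Z1 Z2 Z3 Z4 Z5 Z6 Z7 Z8 Z9 Z10 Z11 by linarith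
    have B0: "fst b {1,16} = 0" using fa[of "{1,16}"] A0 unfolding G_def Gl_def by simp
    have A1: "fst a {6,15} = 1" using t D0 D1 D2 D3 D4 D5 D6 D7 D8 D9 D10 D11 D12 D13 D14 D15 D16 D17 D18 D19 Z0 Z1 Z2 Z3 Z4 Z5 Z6 Z7 Z8 Z9 Z10 Z11 by linarith
    have B1: "fst b {6,15} = 0" using fa[of "{6,15}"] A1 unfolding G_def Gl_def by simp
    show False
    proof (rule hall[OF fin bS cC(3) sbj, of 1 6 13])
      fix e assume e: "e \<in> bip_edges {0..<20} c2" "0 < fst b e" "1 \<in> e \<or> 6 \<in> e"
      have "e \<in> set Gl" using fa[of e] e(2) unfolding G_def by (cases "e \<in> set Gl") auto
      moreover have "\<forall>e\<in>set Gl. e \<in> bip_edges {0..<20} c2 \<longrightarrow> 0 < fst b e \<longrightarrow> 1 \<in> e \<or> 6 \<in> e \<longrightarrow> 13 \<in> e \<and> \<not> (1 \<in> e \<and> 6 \<in> e)"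
        unfolding Gl_def using B0 B1 by (simp add: bipc H2_def)
      ultimately show "13 \<in> e \<and> \<not> (1 \<in> e \<and> 6 \<in> e)" using e by blast
    qed simp_all
  next
    assume t: "fst a {0,11} = 0"
    have A0: "fst a {0,15} = 1" using t D0 D1 D2 D3 D4 D5 D6 D7 D8 D9 D10 D11 D12 D13 D14 D15 D16 D17 D18 D19 Z0 Z1 Z2 Z3 Z4 Z5 Z6 Z7 Z8 Z9 Z10 Z11 by linarith
    have B0: "fst b {0,15} = 0" using fa[of "{0,15}"] A0 unfolding G_def Gl_def by simp
    have A1: "fst a {2,16} = 1" using t D0 D1 D2 D3 D4 D5 D6 D7 D8 D9 D10 D11 D12 D13 D14 D15 D16 D17 D18 D19 Z0 Z1 Z2 Z3 Z4 Z5 Z6 Z7 Z8 Z9 Z10 Z11 by linarith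
    have B1: "fst b {2,16} = 0" using fa[of "{2,16}"] A1 unfolding G_def Gl_def by simp
    show False
    proof (rule hall[OF fin bS cC(3) sbj, of 0 2 12])
      fix e assume e: "e \<in> bip_edges {0..<20} c2" "0 < fst b e" "0 \<in> e \<or> 2 \<in> e"
      have "e \<in> set Gl" using fa[of e] e(2) unfolding G_def by (cases "e \<in> set Gl") auto
      moreover have "\<forall>e\<in>set Gl. e \<in> bip_edges {0..<20} c2 \<longrightarrow> 0 < fst b e \<longrightarrow> 0 \<in> e \<or> 2 \<in> e \<longrightarrow> 12 \<in> e \<and> \<not> (0 \<in> e \<and> 2 \<in> e)"
        unfolding Gl_def using B0 B1 by (simp add: bipc H2_def)
      ultimately show "12 \<in> e \<and> \<not> (0 \<in> e \<and> 2 \<in> e)" using e by blast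
    qed simp_all
  qed
qed

lemma key1:
  assumes aS: "a \<in> SS" and bS: "b \<in> SS" and vab: "vv = vadd a b"
    and s: "snd a c1 = 1" "snd a c0 = 0" "snd a c2 = 0"
  shows False
proof -
  have fin: "finite {0..<20::nat}" by simp
  have fa: "fst a e + fst b e = (if e \<in> G then 1 else 0)" for e
    using vadd_split[OF vab, of e] unfolding vv_def by simp
  have sb: "snd a c + snd b c = (if c \<in> {c0,c1,c2} then 1 else 0)" for c
    using vadd_split[OF vab, of _ c] unfolding vv_def by simp
  have aG: "fst a e = 0" if "e \<notin> G" for e using fa[of e] that by simp
  have sa: "snd a c = (if c = c1 then 1 else 0)" for c
    using sb[of c] s by (cases "c = c0 \<or> c = c1 \<or> c = c2") auto
  have da: "(\<Sum>c\<in>Cset {0..<20}. snd a c) = 1"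
    unfolding sa using finite_Cset[OF fin] cC by simp
  have deg: "sum_list (map (\<lambda>e. if x \<in> e then fst a e else 0) Gl) = 1" if "x \<in> {0..<20}" for x
    using nbar_deg[OF fin aS that] star[of "fst a", OF aG] da by simp
  have only: "e \<in> bip_edges {0..<20} c1" if "fst a e > 0" for e
    using nbar_supp[OF fin aS that] sa by (auto split: if_splits)
  have sbj: "snd b c2 \<ge> 1" using sb[of c2] sa c_ne by auto
  have D0: "fst a {0,11} + fst a {0,12} + fst a {0,15} = 1" using deg[of 0] unfolding Gl_def by (simp add: add.assoc)
  have D1: "fst a {1,11} + fst a {1,13} + fst a {1,16} = 1" using deg[of 1] unfolding Gl_def by (simp add: add.assoc)
  have D2: "fst a {2,10} + fst a {2,12} + fst a {2,16} = 1" using deg[of 2] unfolding Gl_def by (simp add: add.assoc)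
  have D3: "fst a {3,17} + fst a {3,18} + fst a {3,19} = 1" using deg[of 3] unfolding Gl_def by (simp add: add.assoc)
  have D4: "fst a {4,13} + fst a {4,14} + fst a {4,19} = 1" using deg[of 4] unfolding Gl_def by (simp add: add.assoc)
  have D5: "fst a {5,14} + fst a {5,16} + fst a {5,18} = 1" using deg[of 5] unfolding Gl_def by (simp add: add.assoc)
  have D6: "fst a {6,10} + fst a {6,13} + fst a {6,15} = 1" using deg[of 6] unfolding Gl_def by (simp add: add.assoc)
  have D7: "fst a {7,11} + fst a {7,12} + fst a {7,17} = 1" using deg[of 7] unfolding Gl_def by (simp add: add.assoc)
  have D8: "fst a {8,10} + fst a {8,18} + fst a {8,19} = 1" using deg[of 8] unfolding Gl_def by (simp add: add.assoc)
  have D9: "fst a {9,14} + fst a {9,15} + fst a {9,17} = 1" using deg[of 9] unfolding Gl_def by (simp add: add.assoc)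
  have D10: "fst a {2,10} + fst a {6,10} + fst a {8,10} = 1" using deg[of 10] unfolding Gl_def by (simp add: add.assoc)
  have D11: "fst a {0,11} + fst a {1,11} + fst a {7,11} = 1" using deg[of 11] unfolding Gl_def by (simp add: add.assoc)
  have D12: "fst a {0,12} + fst a {2,12} + fst a {7,12} = 1" using deg[of 12] unfolding Gl_def by (simp add: add.assoc)
  have D13: "fst a {1,13} + fst a {4,13} + fst a {6,13} = 1" using deg[of 13] unfolding Gl_def by (simp add: add.assoc)
  have D14: "fst a {4,14} + fst a {5,14} + fst a {9,14} = 1" using deg[of 14] unfolding Gl_def by (simp add: add.assoc)
  have D15: "fst a {0,15} + fst a {6,15} + fst a {9,15} = 1" using deg[of 15] unfolding Gl_def by (simp add: add.assoc)
  have D16: "fst a {1,16} + fst a {2,16} + fst a {5,16} = 1" using deg[of 16] unfolding Gl_def by (simp add: add.assoc)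
  have D17: "fst a {3,17} + fst a {7,17} + fst a {9,17} = 1" using deg[of 17] unfolding Gl_def by (simp add: add.assoc)
  have D18: "fst a {3,18} + fst a {5,18} + fst a {8,18} = 1" using deg[of 18] unfolding Gl_def by (simp add: add.assoc)
  have D19: "fst a {3,19} + fst a {4,19} + fst a {8,19} = 1" using deg[of 19] unfolding Gl_def by (simp add: add.assoc)
  have Z0: "fst a {1,16} = 0" using only[of "{1,16}"] by (auto simp: bipc H1_def)
  have Z1: "fst a {2,16} = 0" using only[of "{2,16}"] by (auto simp: bipc H1_def)
  have Z2: "fst a {3,17} = 0" using only[of "{3,17}"] by (auto simp: bipc H1_def)
  have Z3: "fst a {3,18} = 0" using only[of "{3,18}"] by (auto simp: bipc H1_def)
  have Z4: "fst a {4,13} = 0" using only[of "{4,13}"] by (auto simp: bipc H1_def)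
  have Z5: "fst a {4,19} = 0" using only[of "{4,19}"] by (auto simp: bipc H1_def)
  have Z6: "fst a {7,11} = 0" using only[of "{7,11}"] by (auto simp: bipc H1_def)
  have Z7: "fst a {7,12} = 0" using only[of "{7,12}"] by (auto simp: bipc H1_def)
  have Z8: "fst a {8,10} = 0" using only[of "{8,10}"] by (auto simp: bipc H1_def)
  have Z9: "fst a {8,19} = 0" using only[of "{8,19}"] by (auto simp: bipc H1_def)
  have Z10: "fst a {9,14} = 0" using only[of "{9,14}"] by (auto simp: bipc H1_def)
  have Z11: "fst a {9,17} = 0" using only[of "{9,17}"] by (auto simp: bipc H1_def)
  have tb: "fst a {0,11} \<le> 1" using fa[of "{0,11}"] unfolding G_def Gl_def by simp
  have "fst a {0,11} = 1 \<or> fst a {0,11} = 0" using tb by linarith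
  then show False
  proof
    assume t: "fst a {0,11} = 1"
    have A0: "fst a {1,13} = 1" using t D0 D1 D2 D3 D4 D5 D6 D7 D8 D9 D10 D11 D12 D13 D14 D15 D16 D17 D18 D19 Z0 Z1 Z2 Z3 Z4 Z5 Z6 Z7 Z8 Z9 Z10 Z11 by linarith
    have B0: "fst b {1,13} = 0" using fa[of "{1,13}"] A0 unfolding G_def Gl_def by simp
    have A1: "fst a {2,12} = 1" using t D0 D1 D2 D3 D4 D5 D6 D7 D8 D9 D10 D11 D12 D13 D14 D15 D16 D17 D18 D19 Z0 Z1 Z2 Z3 Z4 Z5 Z6 Z7 Z8 Z9 Z10 Z11 by linarith
    have B1: "fst b {2,12} = 0" using fa[of "{2,12}"] A1 unfolding G_def Gl_def by simp
    show False
    proof (rule hall[OF fin bS cC(3) sbj, of 1 2 16])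
      fix e assume e: "e \<in> bip_edges {0..<20} c2" "0 < fst b e" "1 \<in> e \<or> 2 \<in> e"
      have "e \<in> set Gl" using fa[of e] e(2) unfolding G_def by (cases "e \<in> set Gl") auto
      moreover have "\<forall>e\<in>set Gl. e \<in> bip_edges {0..<20} c2 \<longrightarrow> 0 < fst b e \<longrightarrow> 1 \<in> e \<or> 2 \<in> e \<longrightarrow> 16 \<in> e \<and> \<not> (1 \<in> e \<and> 2 \<in> e)"
        unfolding Gl_def using B0 B1 by (simp add: bipc H2_def)
      ultimately show "16 \<in> e \<and> \<not> (1 \<in> e \<and> 2 \<in> e)" using e by blast
    qed simp_all
  next
    assume t: "fst a {0,11} = 0"
    have A0: "fst a {0,12} = 1" using t D0 D1 D2 D3 D4 D5 D6 D7 D8 D9 D10 D11 D12 D13 D14 D15 D16 D17 D18 D19 Z0 Z1 Z2 Z3 Z4 Z5 Z6 Z7 Z8 Z9 Z10 Z11 by linarith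
    have B0: "fst b {0,12} = 0" using fa[of "{0,12}"] A0 unfolding G_def Gl_def by simp
    have A1: "fst a {6,13} = 1" using t D0 D1 D2 D3 D4 D5 D6 D7 D8 D9 D10 D11 D12 D13 D14 D15 D16 D17 D18 D19 Z0 Z1 Z2 Z3 Z4 Z5 Z6 Z7 Z8 Z9 Z10 Z11 by linarith
    have B1: "fst b {6,13} = 0" using fa[of "{6,13}"] A1 unfolding G_def Gl_def by simp
    show False
    proof (rule hall[OF fin bS cC(3) sbj, of 0 6 15])
      fix e assume e: "e \<in> bip_edges {0..<20} c2" "0 < fst b e" "0 \<in> e \<or> 6 \<in> e"
      have "e \<in> set Gl" using fa[of e] e(2) unfolding G_def by (cases "e \<in> set Gl") auto
      moreover have "\<forall>e\<in>set Gl. e \<in> bip_edges {0..<20} c2 \<longrightarrow> 0 < fst b e \<longrightarrow> 0 \<in> e \<or> 6 \<in> e \<longrightarrow> 15 \<in> e \<and> \<not> (0 \<in> e \<and> 6 \<in> e)"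
        unfolding Gl_def using B0 B1 by (simp add: bipc H2_def)
      ultimately show "15 \<in> e \<and> \<not> (0 \<in> e \<and> 6 \<in> e)" using e by blast
    qed simp_all
  qed
qed

lemma key2:
  assumes aS: "a \<in> SS" and bS: "b \<in> SS" and vab: "vv = vadd a b"
    and s: "snd a c2 = 1" "snd a c0 = 0" "snd a c1 = 0"
  shows False
proof -
  have fin: "finite {0..<20::nat}" by simp
  have fa: "fst a e + fst b e = (if e \<in> G then 1 else 0)" for e
    using vadd_split[OF vab, of e] unfolding vv_def by simp
  have sb: "snd a c + snd b c = (if c \<in> {c0,c1,c2} then 1 else 0)" for c
    using vadd_split[OF vab, of _ c] unfolding vv_def by simp
  have aG: "fst a e = 0" if "e \<notin> G" for e using fa[of e] that by simp
  have sa: "snd a c = (if c = c2 then 1 else 0)" for c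
    using sb[of c] s by (cases "c = c0 \<or> c = c1 \<or> c = c2") auto
  have da: "(\<Sum>c\<in>Cset {0..<20}. snd a c) = 1"
    unfolding sa using finite_Cset[OF fin] cC by simp
  have deg: "sum_list (map (\<lambda>e. if x \<in> e then fst a e else 0) Gl) = 1" if "x \<in> {0..<20}" for x
    using nbar_deg[OF fin aS that] star[of "fst a", OF aG] da by simp
  have only: "e \<in> bip_edges {0..<20} c2" if "fst a e > 0" for e
    using nbar_supp[OF fin aS that] sa by (auto split: if_splits)
  have sbj: "snd b c0 \<ge> 1" using sb[of c0] sa c_ne by auto
  have D0: "fst a {0,11} + fst a {0,12} + fst a {0,15} = 1" using deg[of 0] unfolding Gl_def by (simp add: add.assoc)
  have D1: "fst a {1,11} + fst a {1,13} + fst a {1,16} = 1" using deg[of 1] unfolding Gl_def by (simp add: add.assoc)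
  have D2: "fst a {2,10} + fst a {2,12} + fst a {2,16} = 1" using deg[of 2] unfolding Gl_def by (simp add: add.assoc)
  have D3: "fst a {3,17} + fst a {3,18} + fst a {3,19} = 1" using deg[of 3] unfolding Gl_def by (simp add: add.assoc)
  have D4: "fst a {4,13} + fst a {4,14} + fst a {4,19} = 1" using deg[of 4] unfolding Gl_def by (simp add: add.assoc)
  have D5: "fst a {5,14} + fst a {5,16} + fst a {5,18} = 1" using deg[of 5] unfolding Gl_def by (simp add: add.assoc)
  have D6: "fst a {6,10} + fst a {6,13} + fst a {6,15} = 1" using deg[of 6] unfolding Gl_def by (simp add: add.assoc)
  have D7: "fst a {7,11} + fst a {7,12} + fst a {7,17} = 1" using deg[of 7] unfolding Gl_def by (simp add: add.assoc)
  have D8: "fst a {8,10} + fst a {8,18} + fst a {8,19} = 1" using deg[of 8] unfolding Gl_def by (simp add: add.assoc)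
  have D9: "fst a {9,14} + fst a {9,15} + fst a {9,17} = 1" using deg[of 9] unfolding Gl_def by (simp add: add.assoc)
  have D10: "fst a {2,10} + fst a {6,10} + fst a {8,10} = 1" using deg[of 10] unfolding Gl_def by (simp add: add.assoc)
  have D11: "fst a {0,11} + fst a {1,11} + fst a {7,11} = 1" using deg[of 11] unfolding Gl_def by (simp add: add.assoc)
  have D12: "fst a {0,12} + fst a {2,12} + fst a {7,12} = 1" using deg[of 12] unfolding Gl_def by (simp add: add.assoc)
  have D13: "fst a {1,13} + fst a {4,13} + fst a {6,13} = 1" using deg[of 13] unfolding Gl_def by (simp add: add.assoc)
  have D14: "fst a {4,14} + fst a {5,14} + fst a {9,14} = 1" using deg[of 14] unfolding Gl_def by (simp add: add.assoc)
  have D15: "fst a {0,15} + fst a {6,15} + fst a {9,15} = 1" using deg[of 15] unfolding Gl_def by (simp add: add.assoc)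
  have D16: "fst a {1,16} + fst a {2,16} + fst a {5,16} = 1" using deg[of 16] unfolding Gl_def by (simp add: add.assoc)
  have D17: "fst a {3,17} + fst a {7,17} + fst a {9,17} = 1" using deg[of 17] unfolding Gl_def by (simp add: add.assoc)
  have D18: "fst a {3,18} + fst a {5,18} + fst a {8,18} = 1" using deg[of 18] unfolding Gl_def by (simp add: add.assoc)
  have D19: "fst a {3,19} + fst a {4,19} + fst a {8,19} = 1" using deg[of 19] unfolding Gl_def by (simp add: add.assoc)
  have Z0: "fst a {0,11} = 0" using only[of "{0,11}"] by (auto simp: bipc H2_def)
  have Z1: "fst a {1,11} = 0" using only[of "{1,11}"] by (auto simp: bipc H2_def)
  have Z2: "fst a {2,10} = 0" using only[of "{2,10}"] by (auto simp: bipc H2_def)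
  have Z3: "fst a {4,14} = 0" using only[of "{4,14}"] by (auto simp: bipc H2_def)
  have Z4: "fst a {5,14} = 0" using only[of "{5,14}"] by (auto simp: bipc H2_def)
  have Z5: "fst a {6,10} = 0" using only[of "{6,10}"] by (auto simp: bipc H2_def)
  have Z6: "fst a {7,12} = 0" using only[of "{7,12}"] by (auto simp: bipc H2_def)
  have Z7: "fst a {7,17} = 0" using only[of "{7,17}"] by (auto simp: bipc H2_def)
  have Z8: "fst a {8,18} = 0" using only[of "{8,18}"] by (auto simp: bipc H2_def)
  have Z9: "fst a {8,19} = 0" using only[of "{8,19}"] by (auto simp: bipc H2_def)
  have Z10: "fst a {9,15} = 0" using only[of "{9,15}"] by (auto simp: bipc H2_def)
  have Z11: "fst a {9,17} = 0" using only[of "{9,17}"] by (auto simp: bipc H2_def)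
  have tb: "fst a {0,12} \<le> 1" using fa[of "{0,12}"] unfolding G_def Gl_def by simp
  have "fst a {0,12} = 1 \<or> fst a {0,12} = 0" using tb by linarith
  then show False
  proof
    assume t: "fst a {0,12} = 1"
    have A0: "fst a {2,16} = 1" using t D0 D1 D2 D3 D4 D5 D6 D7 D8 D9 D10 D11 D12 D13 D14 D15 D16 D17 D18 D19 Z0 Z1 Z2 Z3 Z4 Z5 Z6 Z7 Z8 Z9 Z10 Z11 by linarith
    have B0: "fst b {2,16} = 0" using fa[of "{2,16}"] A0 unfolding G_def Gl_def by simp
    have A1: "fst a {6,15} = 1" using t D0 D1 D2 D3 D4 D5 D6 D7 D8 D9 D10 D11 D12 D13 D14 D15 D16 D17 D18 D19 Z0 Z1 Z2 Z3 Z4 Z5 Z6 Z7 Z8 Z9 Z10 Z11 by linarith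
    have B1: "fst b {6,15} = 0" using fa[of "{6,15}"] A1 unfolding G_def Gl_def by simp
    show False
    proof (rule hall[OF fin bS cC(1) sbj, of 2 6 10])
      fix e assume e: "e \<in> bip_edges {0..<20} c0" "0 < fst b e" "2 \<in> e \<or> 6 \<in> e"
      have "e \<in> set Gl" using fa[of e] e(2) unfolding G_def by (cases "e \<in> set Gl") auto
      moreover have "\<forall>e\<in>set Gl. e \<in> bip_edges {0..<20} c0 \<longrightarrow> 0 < fst b e \<longrightarrow> 2 \<in> e \<or> 6 \<in> e \<longrightarrow> 10 \<in> e \<and> \<not> (2 \<in> e \<and> 6 \<in> e)"
        unfolding Gl_def using B0 B1 by (simp add: bipc H0_def)
      ultimately show "10 \<in> e \<and> \<not> (2 \<in> e \<and> 6 \<in> e)" using e by blast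
    qed simp_all
  next
    assume t: "fst a {0,12} = 0"
    have A0: "fst a {0,15} = 1" using t D0 D1 D2 D3 D4 D5 D6 D7 D8 D9 D10 D11 D12 D13 D14 D15 D16 D17 D18 D19 Z0 Z1 Z2 Z3 Z4 Z5 Z6 Z7 Z8 Z9 Z10 Z11 by linarith
    have B0: "fst b {0,15} = 0" using fa[of "{0,15}"] A0 unfolding G_def Gl_def by simp
    have A1: "fst a {1,16} = 1" using t D0 D1 D2 D3 D4 D5 D6 D7 D8 D9 D10 D11 D12 D13 D14 D15 D16 D17 D18 D19 Z0 Z1 Z2 Z3 Z4 Z5 Z6 Z7 Z8 Z9 Z10 Z11 by linarith
    have B1: "fst b {1,16} = 0" using fa[of "{1,16}"] A1 unfolding G_def Gl_def by simp
    show False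
    proof (rule hall[OF fin bS cC(1) sbj, of 0 1 11])
      fix e assume e: "e \<in> bip_edges {0..<20} c0" "0 < fst b e" "0 \<in> e \<or> 1 \<in> e"
      have "e \<in> set Gl" using fa[of e] e(2) unfolding G_def by (cases "e \<in> set Gl") auto
      moreover have "\<forall>e\<in>set Gl. e \<in> bip_edges {0..<20} c0 \<longrightarrow> 0 < fst b e \<longrightarrow> 0 \<in> e \<or> 1 \<in> e \<longrightarrow> 11 \<in> e \<and> \<not> (0 \<in> e \<and> 1 \<in> e)"
        unfolding Gl_def using B0 B1 by (simp add: bipc H0_def)
      ultimately show "11 \<in> e \<and> \<not> (0 \<in> e \<and> 1 \<in> e)" using e by blast
    qed simp_all
  qed
qed



lemma fin20: "finite {0..<20::nat}" by simp

lemma vv_vecs: "vv \<in> vecs {0..<20}"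
  unfolding vecs_def vv_def using G_Kset cC by auto

lemma PM_Ncone: "m \<in> PM V \<Longrightarrow> m \<in> Ncone (PM V)"
proof -
  assume m: "m \<in> PM V"
  have "m = comb {m} (\<lambda>_. 1)" unfolding comb_def by simp
  then show ?thesis unfolding Ncone_comb using m by blast
qed

lemma twice_Ncone: "smul 2 vv \<in> Ncone (PM {0..<20})"
  unfolding twice by (intro Ncone_add PM_Ncone PM_q00 PM_q01 PM_q10 PM_q11 PM_q20 PM_q21)

lemma vv_SS: "vv \<in> SS"
  unfolding Nbar_def using vv_vecs twice_Ncone by (auto intro!: exI[of _ 2])

lemma vv_not_PM: "vv \<notin> PM {0..<20}"
proof
  assume "vv \<in> PM {0..<20}"
  then obtain q c where eq: "vv = chiEc q c" unfolding PM_def by blast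
  have A: "snd vv c0 = 1" "snd vv c1 = 1" by (simp_all add: vv_def)
  have B: "snd vv x = (if x = c then 1 else 0)" for x unfolding eq by (simp add: chiEc_def)
  have "c0 = c"
  proof (rule ccontr)
    assume "c0 \<noteq> c" then show False using A(1) B[of c0] by simp
  qed
  moreover have "c1 = c"
  proof (rule ccontr)
    assume "c1 \<noteq> c" then show False using A(2) B[of c1] by simp
  qed
  ultimately have "c0 = c1" by simp
  then show False using c_ne by simp
qed

lemma irr_vv: "irred SS vv"
  unfolding irred_def
proof (intro conjI ballI impI)
  show "vv \<in> SS" by (rule vv_SS)
  show "vv \<noteq> vzero"
  proof
    assume "vv = vzero"
    then have "snd vv c0 = snd vzero c0" by simp
    then show False unfolding vv_def vzero_def by simp
  qed
  fix a b assume aS: "a \<in> SS" and bS: "b \<in> SS" and vab: "vv = vadd a b"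
  have vba: "vv = vadd b a" using vab vadd_comm by metis
  have sb: "snd a c + snd b c = (if c \<in> {c0,c1,c2} then 1 else 0)" for c
    using vadd_split[OF vab, of _ c] unfolding vv_def by simp
  have e0: "snd a c0 + snd b c0 = 1" and e1: "snd a c1 + snd b c1 = 1" and e2: "snd a c2 + snd b c2 = 1"
    using sb[of c0] sb[of c1] sb[of c2] by simp_all
  have za: "a = vzero" if "snd a c0 = 0" "snd a c1 = 0" "snd a c2 = 0"
  proof (rule nbar_zero[OF fin20 aS], intro ballI)
    fix c show "snd a c = 0" using sb[of c] that by (cases "c \<in> {c0,c1,c2}") auto
  qed
  have zb: "b = vzero" if "snd b c0 = 0" "snd b c1 = 0" "snd b c2 = 0"
  proof (rule nbar_zero[OF fin20 bS], intro ballI)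
    fix c show "snd b c = 0" using sb[of c] that by (cases "c \<in> {c0,c1,c2}") auto
  qed
  have k0: False if "snd a c0 = 1" "snd a c1 = 0" "snd a c2 = 0" using key0[OF aS bS vab] that by blast
  have k1: False if "snd a c1 = 1" "snd a c0 = 0" "snd a c2 = 0" using key1[OF aS bS vab] that by blast
  have k2: False if "snd a c2 = 1" "snd a c0 = 0" "snd a c1 = 0" using key2[OF aS bS vab] that by blast
  have k0': False if "snd b c0 = 1" "snd b c1 = 0" "snd b c2 = 0" using key0[OF bS aS vba] that by blast
  have k1': False if "snd b c1 = 1" "snd b c0 = 0" "snd b c2 = 0" using key1[OF bS aS vba] that by blast
  have k2': False if "snd b c2 = 1" "snd b c0 = 0" "snd b c1 = 0" using key2[OF bS aS vba] that by blast
  have "snd a c0 = 0 \<or> snd a c0 = 1" "snd a c1 = 0 \<or> snd a c1 = 1" "snd a c2 = 0 \<or> snd a c2 = 1"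
    using e0 e1 e2 by linarith+
  then show "a = vzero \<or> b = vzero"
    using za zb k0 k1 k2 k0' k1' k2' e0 e1 e2 by auto
qed

lemma Ev_vv: "Ev {0..<20} vv = G"
  unfolding Ev_def vv_def using G_Kset by auto

lemma cubic_G: "cubic_graph {0..<20} G"
  unfolding cubic_graph_def using G_Kset deg_G by auto

lemma bip_G: "bipartite_graph {0..<20} G"
  unfolding bipartite_graph_def
proof (intro conjI exI[of _ "{0..<10}"])
  show "G \<subseteq> Kset {0..<20}" by (rule G_Kset)
  show "{0..<10} \<subseteq> {0..<20::nat}" by auto
  show "\<forall>e\<in>G. card (e \<inter> {0..<10}) = 1" unfolding G_def Gl_def by (simp add: Int_insert_left)
qed

lemma vv_problem: "vv \<in> problem {0..<20}"
proof -
  have fK: "finite (Kset {0..<20::nat})" by (rule finite_Kset) simp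
  have fC: "finite (Cset {0..<20::nat})" by (rule finite_Cset) simp
  have "(\<Sum>e\<in>Kset {0..<20}. fst vv e) = (\<Sum>e\<in>G. 1)" unfolding vv_def
    by (rule sum.mono_neutral_cong_right[OF fK G_Kset]) auto
  also have "\<dots> = 30" using distinct_card[OF distinct_Gl] unfolding G_def by (simp add: Gl_def)
  finally have K: "(\<Sum>e\<in>Kset {0..<20}. fst vv e) = 30" .
  have Csub: "{c0,c1,c2} \<subseteq> Cset {0..<20}" using cC by auto
  have "(\<Sum>c\<in>Cset {0..<20}. snd vv c) = (\<Sum>c\<in>{c0,c1,c2}. 1)" unfolding vv_def
    by (rule sum.mono_neutral_cong_right[OF fC Csub]) auto
  also have "\<dots> = 3" using c_ne by simp
  finally have C: "(\<Sum>c\<in>Cset {0..<20}. snd vv c) = 3" .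
  show ?thesis unfolding problem_def
    using vv_vecs K C Ev_vv cubic_G unfolding regular_graph_def cubic_graph_def
    by (auto simp: vv_def)
qed

theorem mainTheorem14:
  shows "\<exists>v :: nat vec.
     additional_generator {0..<20} v \<and>
     v \<in> Nbar {0..<20} (PM {0..<20}) \<and> v \<in> problem {0..<20} \<and>
     smul 2 v \<in> Ncone (PM {0..<20}) \<and>
     cubic_graph {0..<20} (Ev {0..<20} v) \<and> bipartite_graph {0..<20} (Ev {0..<20} v) \<and>
     \<not> B_factorizable {0..<20} (Ev {0..<20} v)"
proof (intro exI[of _ vv] conjI)
  show "additional_generator {0..<20} vv"
    unfolding additional_generator_def using irred_hilbert[OF fin20 irr_vv] vv_not_PM by blast
  show "vv \<in> SS" by (rule vv_SS)
  show "vv \<in> problem {0..<20}" by (rule vv_problem)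
  show "smul 2 vv \<in> Ncone (PM {0..<20})" by (rule twice_Ncone)
  show "cubic_graph {0..<20} (Ev {0..<20} vv)" unfolding Ev_vv by (rule cubic_G)
  show "bipartite_graph {0..<20} (Ev {0..<20} vv)" unfolding Ev_vv by (rule bip_G)
  show "\<not> B_factorizable {0..<20} (Ev {0..<20} vv)"
  proof
    assume "B_factorizable {0..<20} (Ev {0..<20} vv)"
    moreover have "fst vv = (\<lambda>e. if e \<in> G then 1 else 0)" by (simp add: vv_def)
    then have "fst vv = (\<lambda>e. if e \<in> Ev {0..<20} vv then 1 else 0)" by (simp only: Ev_vv)
    ultimately have "vv \<in> Ncone (PM {0..<20})" using vv_SS unfolding B_factorizable_def by blast
    then show False using irred_not_Ncone[OF irr_vv vv_not_PM] by blast
  qed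
qed

end
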